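(* Assume the following setup. Let $a,x,u,v$ be integers with $3\le a\le x$, $0\le u\le a-3$, and $u+2\le v\le\min\left(a-1,\frac{a(x-1)}{x}\right)$. Let $\lambda$ consist of $ua+v$ parts equal to $x$ and $v-(u+1)$ parts equal to $ax$, and let $n=|\lambda|$, so that $n=x[(a+1)(v-1)+1]$ and $n-1=xa(v-1)+xv-1$. For $0\le i\le n-2$ write uniquely $i=\frac{n}{x}r_i+(v-1)p_i+q_i$ with integers $0\le r_i<x$, $0\le p_i<a+2$, $0\le q_i<v-1$, $0\le (v-1)p_i+q_i<n/x$. Define \[ s_{2,i}=iax-(n-1)\left\lfloor\frac{iax}{n-1}\right\rfloor,\qquad f(i)=ar_i-(xv-1)p_i+xaq_i, \] and for an integer $k$ let $F_k=\left\{i\in\{1,\dots,n-2\}: k=-\left\lfloor \frac{f(i)}{n-1}\right\rfloor\right\}$. If $i\in F_k$, then $s_{2,i}=f(i)+k(n-1)$. *)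

theory Defs
  imports Complex_Main
begin

definition lam_size :: "int \<Rightarrow> int \<Rightarrow> int \<Rightarrow> int \<Rightarrow> int" where
  "lam_size a x u v = (u*a + v) * x + (v - (u+1)) * (a*x)"

text \<open>The decomposition i = (n/x) r + (v-1) p + q with the stated bounds
  (n/x is an integer since x divides n).\<close>
definition decomp :: "int \<Rightarrow> int \<Rightarrow> int \<Rightarrow> int \<Rightarrow> int \<Rightarrow> int \<times> int \<times> int \<Rightarrow> bool" where
  "decomp n a x v i t = (case t of (r, p, q) \<Rightarrow>
     i = (n div x) * r + (v-1) * p + q \<and> 0 \<le> r \<and> r < x \<and> 0 \<le> p \<and> p < a + 2 \<and>
     0 \<le> q \<and> q < v - 1 \<and> 0 \<le> (v-1)*p + q \<and> (v-1)*p + q < n div x)"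

definition rpq :: "int \<Rightarrow> int \<Rightarrow> int \<Rightarrow> int \<Rightarrow> int \<Rightarrow> int \<times> int \<times> int" where
  "rpq n a x v i = (THE t. decomp n a x v i t)"

definition fval :: "int \<Rightarrow> int \<Rightarrow> int \<Rightarrow> int \<Rightarrow> int \<Rightarrow> int" where
  "fval n a x v i = (case rpq n a x v i of (r, p, q) \<Rightarrow> a*r - (x*v - 1)*p + x*a*q)"

definition s2 :: "int \<Rightarrow> int \<Rightarrow> int \<Rightarrow> int \<Rightarrow> int" where
  "s2 n a x i = i*a*x - (n-1) * \<lfloor>real_of_int (i*a*x) / real_of_int (n-1)\<rfloor>"

definition Fset :: "int \<Rightarrow> int \<Rightarrow> int \<Rightarrow> int \<Rightarrow> int \<Rightarrow> int set" where
  "Fset n a x v k = {i. 1 \<le> i \<and> i \<le> n - 2 \<and>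
      k = - \<lfloor>real_of_int (fval n a x v i) / real_of_int (n-1)\<rfloor>}"

end

theory Submission
  imports Defs
begin

lemma decomp_unique:
  assumes "decomp n a x v i (r1,p1,q1)" "decomp n a x v i (r2,p2,q2)"
  shows "(r1,p1,q1) = (r2,p2,q2)"
proof -
  have h1: "i = (n div x) * r1 + ((v-1)*p1+q1)" "0 \<le> (v-1)*p1+q1" "(v-1)*p1+q1 < n div x"
    "0 \<le> q1" "q1 < v-1"
    using assms(1) unfolding decomp_def by simp_all
  have h2: "i = (n div x) * r2 + ((v-1)*p2+q2)" "0 \<le> (v-1)*p2+q2" "(v-1)*p2+q2 < n div x"
    "0 \<le> q2" "q2 < v-1"
    using assms(2) unfolding decomp_def by simp_all
  have A: "r1 = i div (n div x)" "(v-1)*p1+q1 = i mod (n div x)"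
    using int_div_pos_eq[OF h1(1-3)] int_mod_pos_eq[OF h1(1-3)] by simp_all
  have B: "r2 = i div (n div x)" "(v-1)*p2+q2 = i mod (n div x)"
    using int_div_pos_eq[OF h2(1-3)] int_mod_pos_eq[OF h2(1-3)] by simp_all
  have e1: "i mod (n div x) = (v-1)*p1+q1" using A by simp
  have e2: "i mod (n div x) = (v-1)*p2+q2" using B by simp
  have "p1 = (i mod (n div x)) div (v-1)" "q1 = (i mod (n div x)) mod (v-1)"
    using int_div_pos_eq[OF e1 h1(4,5)] int_mod_pos_eq[OF e1 h1(4,5)] by simp_all
  moreover have "p2 = (i mod (n div x)) div (v-1)" "q2 = (i mod (n div x)) mod (v-1)"
    using int_div_pos_eq[OF e2 h2(4,5)] int_mod_pos_eq[OF e2 h2(4,5)] by simp_all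
  ultimately show ?thesis using A B by simp
qed

lemma decomp_exists:
  fixes a x v i n :: int
  assumes "n = x * ((a+1)*(v-1)+1)" "0 < x" "2 \<le> v" "0 \<le> a" "0 \<le> i" "i < n"
  shows "decomp n a x v i (i div (n div x), (i mod (n div x)) div (v-1), (i mod (n div x)) mod (v-1))"
proof -
  define m where "m = (a+1)*(v-1)+1"
  have nm: "n div x = m" using assms(1,2) m_def by simp
  have m0: "0 < m" using assms m_def by simp
  define w where "w = i mod m"
  have w: "0 \<le> w" "w < m" using m0 w_def by auto
  have d0: "0 < v - 1" using assms by simp
  have r: "0 \<le> i div m" using assms m0 by (simp add: pos_imp_zdiv_nonneg_iff)
  have r2: "i div m < x"
  proof -
    have "i < m * x" using assms m_def by (simp add: mult.commute)
    moreover have "m * (i div m) \<le> i"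
    proof -
      have "i = m*(i div m) + i mod m" by simp
      moreover have "0 \<le> i mod m" using m0 by simp
      ultimately show ?thesis by linarith
    qed
    ultimately show ?thesis using m0
      by (smt (verit) mult_left_mono)
  qed
  have pw: "w div (v-1) < a + 2"
  proof -
    have "w \<le> (a+1)*(v-1)" using w m_def by simp
    hence "w div (v-1) \<le> ((a+1)*(v-1)) div (v-1)" using d0 by (simp only: zdiv_mono1)
    moreover have "((a+1)*(v-1)) div (v-1) = a+1" using d0 by simp
    ultimately show ?thesis by simp
  qed
  have dec: "(v-1) * (w div (v-1)) + w mod (v-1) = w" by simp
  have "i = m * (i div m) + w" using w_def by simp
  thus ?thesis unfolding decomp_def nm
    using r r2 pw dec w d0 w_def[symmetric] by (simp add: pos_imp_zdiv_nonneg_iff)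
qed

theorem lemma4p6:
  fixes a x u v k i :: int
  assumes "3 \<le> a" and "a \<le> x"
    and "0 \<le> u" and "u \<le> a - 3"
    and "u + 2 \<le> v" and "v \<le> a - 1"
    and "real_of_int v \<le> real_of_int (a*(x-1)) / real_of_int x"
    and "i \<in> Fset (lam_size a x u v) a x v k"
  shows "s2 (lam_size a x u v) a x i = fval (lam_size a x u v) a x v i + k * (lam_size a x u v - 1)"
proof -
  define n where "n = lam_size a x u v"
  have n: "n = x * ((a+1)*(v-1)+1)" unfolding n_def lam_size_def by (simp add: algebra_simps)
  have ndx: "n div x = (a+1)*(v-1)+1" using n assms(1,2) by simp
  have i: "1 \<le> i" "i \<le> n - 2" and k: "k = - \<lfloor>real_of_int (fval n a x v i) / real_of_int (n-1)\<rfloor>"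
    using assms(8) unfolding Fset_def n_def by auto
  have ex: "\<exists>t. decomp n a x v i t"
    using decomp_exists[OF n, of i] assms i by fastforce
  have "decomp n a x v i (rpq n a x v i)"
    unfolding rpq_def
    apply (rule theI')
    using ex decomp_unique by (metis prod_cases3)
  then obtain r p q where rpq: "rpq n a x v i = (r,p,q)" and d: "decomp n a x v i (r,p,q)"
    by (metis prod_cases3)
  have iv: "i = (n div x) * r + (v-1)*p + q" using d unfolding decomp_def by simp
  have f: "fval n a x v i = a*r - (x*v-1)*p + x*a*q" unfolding fval_def rpq by simp
  have key0: "((n div x)*r + (v-1)*p+q)*a*x = (a*r - (x*v-1)*p + x*a*q) + (n-1)*(a*r+p)"
    unfolding ndx n by (simp add: algebra_simps)
  have key: "i*a*x = fval n a x v i + (n-1)*(a*r+p)"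
    using key0 iv f by simp
  have "s2 n a x i = (i*a*x) mod (n-1)"
    unfolding s2_def floor_divide_of_int_eq by (simp add: minus_mult_div_eq_mod)
  also have "\<dots> = fval n a x v i mod (n-1)" unfolding key by simp
  also have "\<dots> = fval n a x v i + k*(n-1)"
    unfolding k floor_divide_of_int_eq by (simp add: minus_div_mult_eq_mod[symmetric] algebra_simps)
  finally show ?thesis unfolding n_def .
qed

end
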